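(* Let $r\ge 2$ and let $G$ be a finite graph with $n\le r-1$ vertices, each of degree at least $1$. Consider $\mathcal{F}_{\mathcal{A},I_r}(G)$ (defined in the context) as a function of the parameters $(x_1,\dots,x_{r-1},t)\in\mathbb{C}^r$. Then this function determines the numbers $N_\lambda(G)$ uniquely: if complex numbers $a_\lambda$, indexed by partitions $\lambda$ with $|\lambda|\le n$, satisfy $\mathcal{F}_{\mathcal{A},I_r}(G)=\sum_{|\lambda|\le n}t^{n-|\lambda|}p_\lambda(x_1,\dots,x_{r-1})\,a_\lambda$ for all values of the parameters, then $a_\lambda=N_\lambda(G)$ for all such $\lambda$.
   Context: For $x_1,\dots,x_{r-1},t\in\mathbb{C}$: $V=\mathbb{C}^r$, $B=I_r$, $A_1^i=t$ if $i=r$ and $0$ otherwise; for $d\ge2$, $A_d^{i_1\dots i_d}=x_i$ if $(i_1,\dots,i_d)$ is a permutation of $(i,i,r,\dots,r)$ with $i\in\{1,\dots,r-1\}$, $=t$ if $(i_1,\dots,i_d)=(r,\dots,r)$, and $0$ otherwise. $\mathcal{F}_{\mathcal{A},B}(G)=\sum_{c:H\to\{1,\dots,r\}}\prod_{\{h,h'\}\in E(G)}B_{c(h)c(h')}\prod_{k}A_{d_k}^{c(h_{k,1})\dots c(h_{k,d_k})}$, where $H$ is the set of half-edges of $G$ (two per edge, loops included) and $h_{k,1},\dots,h_{k,d_k}$ are the half-edges at vertex $v_k$ of degree $d_k$. A cycle of $G$ is a $2$-valent subgraph (possibly disconnected or empty); its type is the partition formed by the numbers of edges of its connected components; $N_\lambda(G)$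 is the number of cycles of type $\lambda$. $p_k=\sum_i x_i^k$, $p_\lambda=\prod_j p_{k_j}$ for $\lambda=[k_1,\dots,k_l]$, $p_\emptyset=1$, $|\lambda|=\sum k_j$. *)

theory Defs
  imports Complex_Main "HOL-Library.FuncSet" "HOL-Library.Multiset"
begin

text \<open>A finite multigraph (loops and multiple edges allowed) is given by a finite vertex
set V, a finite edge set E, and for each edge e its ordered pair of endpoints ends e.
Each edge e has two half-edges (e,False) and (e,True); (e,False) sits at fst (ends e),
(e,True) at snd (ends e).  A loop thus gives two half-edges at the same vertex.\<close>

definition half_edges :: "'e set \<Rightarrow> ('e \<times> bool) set" where
  "half_edges E = E \<times> (UNIV :: bool set)"

definition hv :: "('e \<Rightarrow> 'v \<times> 'v) \<Rightarrow> 'e \<times> bool \<Rightarrow> 'v" where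
  "hv ends h = (if snd h then snd (ends (fst h)) else fst (ends (fst h)))"

text \<open>Degree of v w.r.t. an edge set S (loops count twice).\<close>
definition sdeg :: "('e \<Rightarrow> 'v \<times> 'v) \<Rightarrow> 'e set \<Rightarrow> 'v \<Rightarrow> nat" where
  "sdeg ends S v = card {h \<in> half_edges S. hv ends h = v}"

text \<open>B = I_r, colours are 1..r.\<close>
definition Bmat :: "nat \<Rightarrow> nat \<Rightarrow> complex" where
  "Bmat i j = (if i = j then 1 else 0)"

text \<open>The symmetric tensor A_d evaluated at the multiset M of colours (d = size M, d \<ge> 1).\<close>
definition Aten :: "nat \<Rightarrow> (nat \<Rightarrow> complex) \<Rightarrow> complex \<Rightarrow> nat multiset \<Rightarrow> complex" where
  "Aten r x t M =
     (if 1 \<le> size M \<and> M = replicate_mset (size M) r then t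
      else if 2 \<le> size M \<and> (\<exists>i\<in>{1..<r}. M = add_mset i (add_mset i (replicate_mset (size M - 2) r)))
        then x (THE i. i \<in> {1..<r} \<and> M = add_mset i (add_mset i (replicate_mset (size M - 2) r)))
      else 0)"

definition FAB :: "nat \<Rightarrow> (nat \<Rightarrow> complex) \<Rightarrow> complex \<Rightarrow> 'v set \<Rightarrow> 'e set \<Rightarrow> ('e \<Rightarrow> 'v \<times> 'v) \<Rightarrow> complex" where
  "FAB r x t V E ends =
     (\<Sum>c \<in> half_edges E \<rightarrow>\<^sub>E {1..r}.
        (\<Prod>e\<in>E. Bmat (c (e, False)) (c (e, True))) *
        (\<Prod>v\<in>V. Aten r x t (image_mset c (mset_set {h \<in> half_edges E. hv ends h = v}))))"

text \<open>Cycles: 2-valent subgraphs, i.e. edge sets in which every vertex has degree 0 or 2.\<close>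
definition is_cycle :: "'v set \<Rightarrow> 'e set \<Rightarrow> ('e \<Rightarrow> 'v \<times> 'v) \<Rightarrow> 'e set \<Rightarrow> bool" where
  "is_cycle V E ends S \<longleftrightarrow> S \<subseteq> E \<and> (\<forall>v\<in>V. sdeg ends S v = 0 \<or> sdeg ends S v = 2)"

definition endpts :: "('e \<Rightarrow> 'v \<times> 'v) \<Rightarrow> 'e \<Rightarrow> 'v set" where
  "endpts ends e = {fst (ends e), snd (ends e)}"

text \<open>Connected components of the subgraph formed by S, as classes of edges.\<close>
definition comp_rel :: "('e \<Rightarrow> 'v \<times> 'v) \<Rightarrow> 'e set \<Rightarrow> ('e \<times> 'e) set" where
  "comp_rel ends S = {(e, e'). e \<in> S \<and> e' \<in> S \<and> endpts ends e \<inter> endpts ends e' \<noteq> {}}\<^sup>+"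

definition cycle_type :: "('e \<Rightarrow> 'v \<times> 'v) \<Rightarrow> 'e set \<Rightarrow> nat multiset" where
  "cycle_type ends S = image_mset card (mset_set (S // comp_rel ends S))"

definition Ncyc :: "'v set \<Rightarrow> 'e set \<Rightarrow> ('e \<Rightarrow> 'v \<times> 'v) \<Rightarrow> nat multiset \<Rightarrow> nat" where
  "Ncyc V E ends lam = card {S. is_cycle V E ends S \<and> cycle_type ends S = lam}"

text \<open>Partitions as multisets of positive integers; |lam| = sum_mset lam.\<close>
definition partitions_upto :: "nat \<Rightarrow> nat multiset set" where
  "partitions_upto n = {lam. (\<forall>k\<in>#lam. 0 < k) \<and> sum_mset lam \<le> n}"

definition pk :: "nat \<Rightarrow> (nat \<Rightarrow> complex) \<Rightarrow> nat \<Rightarrow> complex" where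
  "pk r x k = (\<Sum>i\<in>{1..<r}. x i ^ k)"

definition plam :: "nat \<Rightarrow> (nat \<Rightarrow> complex) \<Rightarrow> nat multiset \<Rightarrow> complex" where
  "plam r x lam = prod_mset (image_mset (pk r x) lam)"

end

theory Submission
  imports Defs
begin

lemma digits_bound:
  fixes \<alpha> :: "nat \<Rightarrow> nat"
  assumes "\<forall>i<K. \<alpha> i < B"
  shows "(\<Sum>i<K. \<alpha> i * B^i) < B^K"
  using assms
proof (induction K)
  case 0 then show ?case by simp
next
  case (Suc K)
  then have s: "(\<Sum>i<K. \<alpha> i * B^i) < B^K" and a: "\<alpha> K + 1 \<le> B" by auto
  have "(\<Sum>i<Suc K. \<alpha> i * B^i) = (\<Sum>i<K. \<alpha> i * B^i) + \<alpha> K * B^K" by simp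
  also have "... < B^K + \<alpha> K * B^K" using s by simp
  also have "... = (\<alpha> K + 1) * B^K" by simp
  also have "... \<le> B * B^K" using a by (rule mult_right_mono) simp
  finally show ?case by simp
qed

lemma digits_unique:
  fixes \<alpha> \<beta> :: "nat \<Rightarrow> nat"
  assumes "\<forall>i<K. \<alpha> i < B" "\<forall>i<K. \<beta> i < B"
    "(\<Sum>i<K. \<alpha> i * B^i) = (\<Sum>i<K. \<beta> i * B^i)"
  shows "\<forall>i<K. \<alpha> i = \<beta> i"
  using assms
proof (induction K)
  case 0 then show ?case by simp
next
  case (Suc K)
  let ?a = "\<Sum>i<K. \<alpha> i * B^i" and ?b = "\<Sum>i<K. \<beta> i * B^i"
  have ba: "?a < B^K" and bb: "?b < B^K" using Suc.prems by (auto intro!: digits_bound)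
  have eq: "?a + \<alpha> K * B^K = ?b + \<beta> K * B^K" using Suc.prems(3) by simp
  have pos: "B^K > 0" using bb by linarith
  have "(?a + \<alpha> K * B^K) div B^K = \<alpha> K" using ba pos by simp
  moreover have "(?b + \<beta> K * B^K) div B^K = \<beta> K" using bb pos by simp
  ultimately have k: "\<alpha> K = \<beta> K" using eq by simp
  with eq have "?a = ?b" by simp
  with Suc.IH Suc.prems have "\<forall>i<K. \<alpha> i = \<beta> i" by auto
  with k show ?case using less_Suc_eq by auto
qed

definition expo :: "nat \<Rightarrow> nat list \<Rightarrow> (nat \<Rightarrow> nat) \<Rightarrow> nat" where
  "expo B M f = (\<Sum>j<length M. M!j * B^(f j))"

definition dig :: "nat list \<Rightarrow> (nat \<Rightarrow> nat) \<Rightarrow> nat \<Rightarrow> nat" where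
  "dig M f i = (\<Sum>j\<in>{j. j < length M \<and> f j = i}. M!j)"

lemma expo_dig:
  assumes "\<forall>j<length M. f j < K"
  shows "expo B M f = (\<Sum>i<K. dig M f i * B^i)"
proof -
  have "expo B M f = (\<Sum>i<K. \<Sum>j\<in>{j. j \<in> {..<length M} \<and> f j = i}. M!j * B^(f j))"
    unfolding expo_def by (rule sum.group[symmetric]) (use assms in auto)
  also have "... = (\<Sum>i<K. dig M f i * B^i)"
  proof (intro sum.cong refl)
    fix i assume "i \<in> {..<K}"
    show "(\<Sum>j\<in>{j. j \<in> {..<length M} \<and> f j = i}. M!j * B^(f j)) = dig M f i * B^i"
      unfolding dig_def sum_distrib_right by (intro sum.cong) auto
  qed
  finally show ?thesis .
qed

lemma dig_le: "dig M f i \<le> sum_list M"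
proof -
  have "dig M f i \<le> (\<Sum>j\<in>{..<length M}. M!j)"
    unfolding dig_def by (rule sum_mono2) auto
  also have "... = sum_list M" by (simp add: sum_list_sum_nth atLeast0LessThan)
  finally show ?thesis .
qed

lemma mset_nth: "mset M = image_mset (nth M) (mset_set {..<length M})"
proof -
  have "mset M = mset (map (nth M) [0..<length M])" by (simp add: map_nth)
  then show ?thesis by (simp add: atLeast0LessThan)
qed

lemma key_mset:
  assumes B: "sum_list M < B" "sum_list L < B"
    and pos: "\<forall>k\<in>set L. 0 < k"
    and len: "length M \<le> length L" "length L < K"
    and f: "\<forall>j<length M. f j < K"
    and e: "expo B M f = expo B L Suc"
  shows "mset M = mset L"
proof -
  define m where "m = length M"
  define l where "l = length L"
  have fL: "\<forall>j<length L. Suc j < K" using len by auto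
  have d: "\<forall>i<K. dig M f i = dig L Suc i"
    apply (rule digits_unique[where B = B])
    using dig_le[of M f] dig_le[of L Suc] B expo_dig[OF f, of B] expo_dig[OF fL, of B] e
    by (auto intro: le_less_trans)
  have dL: "dig L Suc i = L!(i-1)" if "1 \<le> i" "i \<le> l" for i
  proof -
    have "{j. j < length L \<and> Suc j = i} = {i-1}" using that l_def by auto
    then show ?thesis unfolding dig_def by simp
  qed
  have sub: "{1..l} \<subseteq> f ` {..<m}"
  proof
    fix i assume i: "i \<in> {1..l}"
    then have "i < K" using len l_def by auto
    then have "dig M f i = L!(i-1)" using d dL i by auto
    moreover have "L!(i-1) > 0" using pos i l_def by auto
    ultimately have "{j. j < length M \<and> f j = i} \<noteq> {}" unfolding dig_def by (metis less_irrefl sum.empty)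
    then show "i \<in> f ` {..<m}" using m_def by auto
  qed
  have "l \<le> card (f ` {..<m})" using card_mono[OF _ sub] by simp
  moreover have "card (f ` {..<m}) \<le> m" using card_image_le[of "{..<m}" f] by simp
  ultimately have ml: "m = l" and cm: "card (f ` {..<m}) = m" using len m_def l_def by auto
  have inj: "inj_on f {..<m}" using cm by (intro eq_card_imp_inj_on) auto
  have img: "f ` {..<m} = {1..l}"
    using card_subset_eq[OF _ sub] cm ml by (metis card_atLeastAtMost diff_Suc_1 finite_imageI finite_lessThan)
  have Mj: "M!j = L!(f j - 1)" if j: "j < m" for j
  proof -
    have "{j'. j' < length M \<and> f j' = f j} = {j}" using inj j m_def by (auto dest: inj_onD)
    then have "dig M f (f j) = M!j" unfolding dig_def by simp
    moreover have "f j \<in> {1..l}" using img j by auto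
    moreover have "f j < K" using f j m_def by auto
    ultimately show ?thesis using d dL by auto
  qed
  have "mset M = image_mset (\<lambda>j. L!(f j - 1)) (mset_set {..<m})"
    unfolding mset_nth m_def using Mj m_def by (intro image_mset_cong) auto
  also have "... = image_mset (\<lambda>i. L!(i - 1)) (image_mset f (mset_set {..<m}))"
    by (simp add: image_mset.compositionality comp_def)
  also have "image_mset f (mset_set {..<m}) = mset_set {1..l}"
    using image_mset_mset_set[OF inj] img by simp
  also have "{1..l} = Suc ` {..<l}" by (simp add: image_Suc_lessThan)
  also have "mset_set (Suc ` {..<l}) = image_mset Suc (mset_set {..<l})"
    by (simp add: image_mset_mset_set)
  also have "image_mset (\<lambda>i. L!(i - 1)) (image_mset Suc (mset_set {..<l})) = mset L"
    unfolding mset_nth[of L] l_def by (simp add: image_mset.compositionality comp_def)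
  finally show ?thesis .
qed

lemma plam_subst:
  fixes u :: complex
  shows "plam r (\<lambda>i. u ^ (B^i)) (mset M) = (\<Sum>f\<in>{..<length M} \<rightarrow>\<^sub>E {1..<r}. u ^ expo B M f)"
proof -
  have "plam r (\<lambda>i. u ^ (B^i)) (mset M) = (\<Prod>j<length M. pk r (\<lambda>i. u ^ (B^i)) (M!j))"
    unfolding plam_def mset_nth[of M] image_mset.compositionality
    by (simp add: prod_unfold_prod_mset comp_def)
  also have "... = (\<Prod>j<length M. \<Sum>i\<in>{1..<r}. u ^ (M!j * B^i))"
    unfolding pk_def by (simp add: power_mult[symmetric] mult.commute)
  also have "... = (\<Sum>f\<in>{..<length M} \<rightarrow>\<^sub>E {1..<r}. \<Prod>j<length M. u ^ (M!j * B^(f j)))"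
    by (rule prod_sum_PiE) auto
  also have "... = (\<Sum>f\<in>{..<length M} \<rightarrow>\<^sub>E {1..<r}. u ^ expo B M f)"
    unfolding expo_def by (simp add: power_sum)
  finally show ?thesis .
qed

lemma sum_pow_group:
  fixes u :: complex
  assumes "finite F" "\<forall>f\<in>F. e f \<le> D"
  shows "(\<Sum>f\<in>F. u ^ e f) = (\<Sum>N\<le>D. of_nat (card {f\<in>F. e f = N}) * u ^ N)"
proof -
  have "(\<Sum>f\<in>F. u ^ e f) = (\<Sum>N\<in>{..D}. \<Sum>f\<in>{f. f\<in>F \<and> e f = N}. u ^ e f)"
    by (rule sum.group[symmetric]) (use assms in auto)
  also have "... = (\<Sum>N\<in>{..D}. \<Sum>f\<in>{f. f\<in>F \<and> e f = N}. u ^ N)"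
    by (intro sum.cong refl) auto
  also have "... = (\<Sum>N\<le>D. of_nat (card {f\<in>F. e f = N}) * u ^ N)"
    by simp
  finally show ?thesis .
qed

lemma expo_le:
  assumes "f \<in> {..<length M} \<rightarrow>\<^sub>E {1..<r}" "sum_list M \<le> n" "B \<ge> 1"
  shows "expo B M f \<le> n * B^r"
proof -
  have "expo B M f \<le> (\<Sum>j<length M. M!j * B^r)"
    unfolding expo_def
  proof (rule sum_mono)
    fix j assume "j \<in> {..<length M}"
    then have "f j < r" using assms(1) by auto
    then have "B^(f j) \<le> B^r" using assms(3) by (intro power_increasing) auto
    then show "M!j * B^(f j) \<le> M!j * B^r" by simp
  qed
  also have "... = sum_list M * B^r"
    by (simp add: sum_distrib_right[symmetric] sum_list_sum_nth atLeast0LessThan)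
  also have "... \<le> n * B^r" using assms(2) by simp
  finally show ?thesis .
qed

lemma size_le_sum_mset:
  assumes "\<forall>k\<in>#mu. 0 < (k::nat)"
  shows "size mu \<le> sum_mset mu"
  using assms
proof (induction mu)
  case empty then show ?case by simp
next
  case (add x mu) then show ?case by simp
qed

lemma plam_indep:
  fixes c :: "nat multiset \<Rightarrow> complex"
  assumes r: "n < r" and P: "P \<subseteq> partitions_upto n" "finite P"
    and z: "\<forall>x. (\<Sum>mu\<in>P. c mu * plam r x mu) = 0"
  shows "\<forall>mu\<in>P. c mu = 0"
proof (rule ccontr)
  assume H: "\<not> (\<forall>mu\<in>P. c mu = 0)"
  define S where "S = {mu\<in>P. c mu \<noteq> 0}"
  have ne: "S \<noteq> {}" using H S_def by auto
  have fin: "finite S" using P S_def by simp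
  define m where "m = Max (size ` S)"
  have "m \<in> size ` S" unfolding m_def using ne fin by (intro Max_in) auto
  then obtain lam where lamS: "lam \<in> S" and lm: "size lam = m" by auto
  have lmax: "size mu \<le> size lam" if "mu \<in> S" for mu
    using that fin lm m_def by auto
  have lam: "lam \<in> P" "c lam \<noteq> 0" using lamS S_def by auto
  define B where "B = Suc n"
  define Lm where "Lm = (\<lambda>mu::nat multiset. sorted_list_of_multiset mu)"
  define F where "F = (\<lambda>mu. {..<length (Lm mu)} \<rightarrow>\<^sub>E {1..<r})"
  define D where "D = n * B^r"
  define cnt where "cnt = (\<lambda>mu N. card {f\<in>F mu. expo B (Lm mu) f = N})"
  have part: "(\<forall>k\<in>#mu. 0 < k) \<and> sum_mset mu \<le> n" if "mu \<in> P" for mu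
    using that P unfolding partitions_upto_def by auto
  have sl: "sum_list (Lm mu) = sum_mset mu" for mu
    unfolding Lm_def by (metis mset_sorted_list_of_multiset sum_mset_sum_list)
  have ll: "length (Lm mu) = size mu" for mu
    unfolding Lm_def by (metis mset_sorted_list_of_multiset size_mset)
  have finF: "finite (F mu)" for mu unfolding F_def by (intro finite_PiE) auto
  have eD: "expo B (Lm mu) f \<le> D" if "mu \<in> P" "f \<in> F mu" for mu f
    unfolding D_def using that part[OF that(1)] sl F_def B_def by (intro expo_le) auto
  have coef: "\<forall>N\<le>D. (\<Sum>mu\<in>P. c mu * of_nat (cnt mu N)) = 0"
  proof -
    have "(\<Sum>N\<le>D. (\<Sum>mu\<in>P. c mu * of_nat (cnt mu N)) * u ^ N) = 0" for u :: complex
    proof -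
      have "(\<Sum>N\<le>D. (\<Sum>mu\<in>P. c mu * of_nat (cnt mu N)) * u ^ N)
          = (\<Sum>mu\<in>P. c mu * (\<Sum>N\<le>D. of_nat (cnt mu N) * u ^ N))"
        by (simp add: sum_distrib_left sum_distrib_right sum.swap[of _ "{..D}"] mult.assoc)
      also have "... = (\<Sum>mu\<in>P. c mu * plam r (\<lambda>i. u ^ (B^i)) mu)"
      proof (intro sum.cong refl)
        fix mu assume mu: "mu \<in> P"
        have "plam r (\<lambda>i. u ^ (B^i)) mu = plam r (\<lambda>i. u ^ (B^i)) (mset (Lm mu))"
          unfolding Lm_def by simp
        also have "... = (\<Sum>f\<in>F mu. u ^ expo B (Lm mu) f)"
          unfolding F_def by (rule plam_subst)
        also have "... = (\<Sum>N\<le>D. of_nat (cnt mu N) * u ^ N)"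
          unfolding cnt_def using eD[OF mu] finF by (intro sum_pow_group) auto
        finally show "c mu * (\<Sum>N\<le>D. of_nat (cnt mu N) * u ^ N) = c mu * plam r (\<lambda>i. u ^ (B^i)) mu"
          by simp
      qed
      also have "... = 0" using z by blast
      finally show ?thesis .
    qed
    then show ?thesis using polyfun_eq_0[where n=D and c="\<lambda>N. (\<Sum>mu\<in>P. c mu * of_nat (cnt mu N))"]
      by blast
  qed
  define L where "L = Lm lam"
  define f0 where "f0 = restrict Suc {..<length L}"
  define N0 where "N0 = expo B L Suc"
  have lenL: "length L < r" using part[OF lam(1)] size_le_sum_mset[of lam] r ll L_def by fastforce
  have f0F: "f0 \<in> F lam" unfolding f0_def F_def L_def[symmetric] using lenL by auto
  have e0: "expo B L f0 = N0" unfolding N0_def expo_def f0_def by (intro sum.cong refl) auto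
  have N0D: "N0 \<le> D" using eD[OF lam(1) f0F] e0 L_def by simp
  have zero_other: "c mu * of_nat (cnt mu N0) = 0" if mu: "mu \<in> P" "mu \<noteq> lam" for mu
  proof (cases "c mu = 0")
    case True then show ?thesis by simp
  next
    case False
    then have muS: "mu \<in> S" using mu S_def by auto
    have "{f\<in>F mu. expo B (Lm mu) f = N0} = {}"
    proof (rule ccontr)
      assume "{f\<in>F mu. expo B (Lm mu) f = N0} \<noteq> {}"
      then obtain f where f: "f \<in> F mu" "expo B (Lm mu) f = N0" by auto
      have "mset (Lm mu) = mset L"
      proof (rule key_mset[where B = B and K = r and f = f])
        show "sum_list (Lm mu) < B" using sl part[OF mu(1)] B_def by simp
        show "sum_list L < B" using sl part[OF lam(1)] B_def L_def by simp
        show "\<forall>k\<in>set L. 0 < k" using part[OF lam(1)] L_def Lm_def by simp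
        show "length (Lm mu) \<le> length L" using lmax[OF muS] ll L_def by simp
        show "length L < r" by (rule lenL)
        have fF: "f \<in> {..<length (Lm mu)} \<rightarrow>\<^sub>E {1..<r}" using f(1) unfolding F_def .
        show "\<forall>j<length (Lm mu). f j < r"
        proof (intro allI impI)
          fix j assume "j < length (Lm mu)"
          then have "f j \<in> {1..<r}" using fF by (simp add: PiE_iff)
          then show "f j < r" by simp
        qed
        show "expo B (Lm mu) f = expo B L Suc" using f(2) N0_def by simp
      qed
      then have "mu = lam" unfolding L_def Lm_def by simp
      with mu show False by simp
    qed
    then have "cnt mu N0 = 0" unfolding cnt_def by (simp only: card.empty)
    then show ?thesis by simp
  qed
  have "(\<Sum>mu\<in>P. c mu * of_nat (cnt mu N0)) = c lam * of_nat (cnt lam N0)"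
  proof -
    have z0: "(\<Sum>mu\<in>P - {lam}. c mu * of_nat (cnt mu N0)) = 0"
      using zero_other by (intro sum.neutral) auto
    show ?thesis using sum.remove[OF P(2) lam(1), of "\<lambda>mu. c mu * of_nat (cnt mu N0)"] z0 by simp
  qed
  then have "c lam * of_nat (cnt lam N0) = 0" using coef N0D by simp
  moreover have "cnt lam N0 \<noteq> 0"
    unfolding cnt_def using f0F e0 finF L_def by (subst card_0_eq) auto
  ultimately show False using lam(2) by simp
qed


definition Hs :: "('e \<Rightarrow> 'v \<times> 'v) \<Rightarrow> 'e set \<Rightarrow> 'v \<Rightarrow> ('e \<times> bool) set" where
  "Hs ends S v = {h \<in> half_edges S. hv ends h = v}"

lemma all_eq_replicate: "(\<forall>a\<in>#M. a = r) \<Longrightarrow> M = replicate_mset (size M) r"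
  by (induction M) auto

lemma filter_replicate_neq: "filter_mset (\<lambda>a. a \<noteq> r) (replicate_mset k r) = {#}"
  by (induction k) auto

lemma filter_two: "i \<noteq> r \<Longrightarrow>
  filter_mset (\<lambda>a. a \<noteq> r) (add_mset i (add_mset i (replicate_mset k r))) = {#i, i#}"
  by (simp add: filter_replicate_neq)

lemma Aten_a:
  assumes "filter_mset (\<lambda>a. a \<noteq> r) M = {#}" "size M \<ge> 1"
  shows "Aten r x t M = t"
proof -
  have "\<forall>a\<in>#M. a = r"
  proof
    fix a assume a: "a \<in># M"
    show "a = r"
    proof (rule ccontr)
      assume "a \<noteq> r"
      then have "a \<in># filter_mset (\<lambda>a. a \<noteq> r) M" using a by simp
      then show False using assms(1) by simp
    qed
  qed
  then have M: "M = replicate_mset (size M) r" by (rule all_eq_replicate)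
  have "1 \<le> size M \<and> M = replicate_mset (size M) r" using M assms(2) by blast
  then show ?thesis unfolding Aten_def by (rule if_P)
qed

lemma Aten_b:
  assumes "filter_mset (\<lambda>a. a \<noteq> r) M = {#i, i#}" "set_mset M \<subseteq> {1..r}"
  shows "Aten r x t M = x i"
proof -
  have iF: "i \<in># filter_mset (\<lambda>a. a \<noteq> r) M" using assms(1) by simp
  then have iM: "i \<in># M" and ir: "i \<noteq> r" by auto
  have i: "i \<in> {1..<r}" using iM ir assms(2) by fastforce
  have rep: "filter_mset (\<lambda>a. \<not> a \<noteq> r) M = replicate_mset (count M r) r"
    by (simp add: filter_eq_replicate_mset)
  have M: "M = add_mset i (add_mset i (replicate_mset (count M r) r))"
    using multiset_partition[of M "\<lambda>a. a \<noteq> r"] unfolding assms(1) rep by simp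
  have "size M = size (add_mset i (add_mset i (replicate_mset (count M r) r)))"
    using M by (rule arg_cong)
  then have sz: "size M = count M r + 2" by simp
  then have cnt: "count M r = size M - 2" by simp
  have M2: "M = add_mset i (add_mset i (replicate_mset (size M - 2) r))"
    using M unfolding cnt .
  have n1: "\<not> (M = replicate_mset (size M) r)"
  proof
    assume "M = replicate_mset (size M) r"
    then have "filter_mset (\<lambda>a. a \<noteq> r) M = filter_mset (\<lambda>a. a \<noteq> r) (replicate_mset (size M) r)"
      by (rule arg_cong)
    then have "filter_mset (\<lambda>a. a \<noteq> r) M = {#}" unfolding filter_replicate_neq .
    then show False using assms(1) by simp
  qed
  have the: "(THE j. j \<in> {1..<r} \<and> M = add_mset j (add_mset j (replicate_mset (size M - 2) r))) = i"
  proof (rule the_equality)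
    show "i \<in> {1..<r} \<and> M = add_mset i (add_mset i (replicate_mset (size M - 2) r))" using i M2 by blast
  next
    fix j assume j: "j \<in> {1..<r} \<and> M = add_mset j (add_mset j (replicate_mset (size M - 2) r))"
    then have j1: "j \<in> {1..<r}" and Mj: "M = add_mset j (add_mset j (replicate_mset (size M - 2) r))" by blast+
    from j1 have jr: "j \<noteq> r" by simp
    have "filter_mset (\<lambda>a. a \<noteq> r) M = filter_mset (\<lambda>a. a \<noteq> r) (add_mset j (add_mset j (replicate_mset (size M - 2) r)))"
      using Mj by (rule arg_cong)
    then have "filter_mset (\<lambda>a. a \<noteq> r) M = {#j, j#}" unfolding filter_two[OF jr] .
    then have eq: "{#j, j#} = {#i, i#}" using assms(1) by simp
    have "j \<in># {#j, j#}" by simp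
    then have "j \<in># {#i, i#}" unfolding eq .
    then show "j = i" by simp
  qed
  have s2: "2 \<le> size M" using sz by simp
  have P2: "2 \<le> size M \<and> (\<exists>j\<in>{1..<r}. M = add_mset j (add_mset j (replicate_mset (size M - 2) r)))"
    using s2 i M2 by blast
  have n1': "\<not> (1 \<le> size M \<and> M = replicate_mset (size M) r)" using n1 by blast
  show ?thesis unfolding Aten_def
    by (subst if_not_P[OF n1'], subst if_P[OF P2], simp only: the)
qed

lemma Aten_c:
  assumes "filter_mset (\<lambda>a. a \<noteq> r) M \<noteq> {#}" "\<forall>i. filter_mset (\<lambda>a. a \<noteq> r) M \<noteq> {#i, i#}"
  shows "Aten r x t M = 0"
proof -
  have n1: "\<not> (M = replicate_mset (size M) r)"
  proof
    assume "M = replicate_mset (size M) r"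
    then have "filter_mset (\<lambda>a. a \<noteq> r) M = filter_mset (\<lambda>a. a \<noteq> r) (replicate_mset (size M) r)"
      by (rule arg_cong)
    then have "filter_mset (\<lambda>a. a \<noteq> r) M = {#}" unfolding filter_replicate_neq .
    then show False using assms(1) by simp
  qed
  have n2: "\<not> (\<exists>i\<in>{1..<r}. M = add_mset i (add_mset i (replicate_mset (size M - 2) r)))"
  proof
    assume "\<exists>i\<in>{1..<r}. M = add_mset i (add_mset i (replicate_mset (size M - 2) r))"
    then obtain i where i: "i \<in> {1..<r}" and Meq: "M = add_mset i (add_mset i (replicate_mset (size M - 2) r))" by blast
    have "i \<noteq> r" using i by auto
    then have "filter_mset (\<lambda>a. a \<noteq> r) M = {#i, i#}" by (subst Meq) (rule filter_two)
    then show False using assms(2) by blast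
  qed
  have n1': "\<not> (1 \<le> size M \<and> M = replicate_mset (size M) r)" using n1 by blast
  have n2': "\<not> (2 \<le> size M \<and> (\<exists>j\<in>{1..<r}. M = add_mset j (add_mset j (replicate_mset (size M - 2) r))))"
    using n2 by blast
  show ?thesis unfolding Aten_def
    by (subst if_not_P[OF n1'], subst if_not_P[OF n2'], rule refl)
qed

definition Sg :: "'e set \<Rightarrow> ('e \<Rightarrow> nat) \<Rightarrow> nat \<Rightarrow> 'e set" where
  "Sg E g r = {e\<in>E. g e \<noteq> r}"

definition vgood :: "('e \<Rightarrow> 'v \<times> 'v) \<Rightarrow> ('e \<Rightarrow> nat) \<Rightarrow> 'e set \<Rightarrow> 'v \<Rightarrow> bool" where
  "vgood ends g S v \<longleftrightarrow> Hs ends S v = {} \<or>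
     (card (Hs ends S v) = 2 \<and> (\<forall>h\<in>Hs ends S v. \<forall>h'\<in>Hs ends S v. g (fst h) = g (fst h')))"

definition col :: "('e \<Rightarrow> 'v \<times> 'v) \<Rightarrow> ('e \<Rightarrow> nat) \<Rightarrow> 'e set \<Rightarrow> 'v \<Rightarrow> nat" where
  "col ends g S v = g (fst (SOME h. h \<in> Hs ends S v))"

lemma Hs_finite: "finite E \<Longrightarrow> finite (Hs ends E v)"
  unfolding Hs_def half_edges_def by simp

lemma Hs_Sg: "Hs ends (Sg E g r) v = {h \<in> Hs ends E v. g (fst h) \<noteq> r}"
  unfolding Hs_def half_edges_def Sg_def by auto

lemma Sg_sub: "Sg E g r \<subseteq> E" unfolding Sg_def by auto

lemma image_two:
  assumes "finite A" "card A = 2" "\<forall>h\<in>A. f h = i"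
  shows "image_mset f (mset_set A) = {#i, i#}"
proof -
  obtain h1 h2 where "A = {h1, h2}" "h1 \<noteq> h2" using assms(2) by (meson card_2_iff)
  then show ?thesis using assms(3) by simp
qed

lemma vertex:
  assumes fin: "finite E" and g: "g \<in> E \<rightarrow> {1..r}" and deg: "card (Hs ends E v) \<ge> 1"
  shows "Aten r x t (image_mset (g \<circ> fst) (mset_set (Hs ends E v))) =
     (if vgood ends g (Sg E g r) v then (if Hs ends (Sg E g r) v = {} then t else x (col ends g (Sg E g r) v)) else 0)"
proof -
  let ?M = "image_mset (g \<circ> fst) (mset_set (Hs ends E v))"
  let ?A = "Hs ends (Sg E g r) v"
  have fA: "finite ?A" using Hs_finite[of "Sg E g r"] fin Sg_sub finite_subset by metis
  have fE: "finite (Hs ends E v)" using Hs_finite fin by metis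
  have filt: "filter_mset (\<lambda>a. a \<noteq> r) ?M = image_mset (g \<circ> fst) (mset_set ?A)"
    using fE by (simp add: filter_mset_image_mset Hs_Sg)
  have set: "set_mset ?M \<subseteq> {1..r}" using g fE unfolding Hs_def half_edges_def by auto
  have size: "size ?M \<ge> 1" using deg by simp
  show ?thesis
  proof (cases "?A = {}")
    case True
    then have "filter_mset (\<lambda>a. a \<noteq> r) ?M = {#}" using filt by simp
    then have At: "Aten r x t ?M = t" using size by (rule Aten_a)
    have vg: "vgood ends g (Sg E g r) v" unfolding vgood_def using True by (rule disjI1)
    show ?thesis unfolding At by (simp only: if_P[OF vg] if_P[OF True])
  next
    case ne: False
    show ?thesis
    proof (cases "vgood ends g (Sg E g r) v")
      case True
      have c2: "card ?A = 2" and cst: "\<forall>h\<in>?A. \<forall>h'\<in>?A. g (fst h) = g (fst h')"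
        using True ne unfolding vgood_def by blast+
      have "(SOME h. h \<in> ?A) \<in> ?A" using ne by (meson ex_in_conv someI_ex)
      then have all: "\<forall>h\<in>?A. (g \<circ> fst) h = col ends g (Sg E g r) v"
        using cst unfolding col_def comp_def by blast
      have "filter_mset (\<lambda>a. a \<noteq> r) ?M = {#col ends g (Sg E g r) v, col ends g (Sg E g r) v#}"
        using filt image_two[OF fA c2 all] by simp
      then have At: "Aten r x t ?M = x (col ends g (Sg E g r) v)" using set by (rule Aten_b)
      show ?thesis unfolding At by (simp only: if_P[OF True] if_not_P[OF ne])
    next
      case False
      have f1: "filter_mset (\<lambda>a. a \<noteq> r) ?M \<noteq> {#}" using filt ne fA by (simp add: mset_set_empty_iff)
      have f2: "\<forall>i. filter_mset (\<lambda>a. a \<noteq> r) ?M \<noteq> {#i, i#}"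
      proof (intro allI notI)
        fix i assume "filter_mset (\<lambda>a. a \<noteq> r) ?M = {#i, i#}"
        then have im: "image_mset (g \<circ> fst) (mset_set ?A) = {#i, i#}" using filt by simp
        then have "size (image_mset (g \<circ> fst) (mset_set ?A)) = 2" by simp
        then have "card ?A = 2" by simp
        moreover have "\<forall>h\<in>?A. g (fst h) = i"
        proof
          fix h assume "h \<in> ?A"
          then have "(g \<circ> fst) h \<in># image_mset (g \<circ> fst) (mset_set ?A)" using fA by simp
          then show "g (fst h) = i" using im by simp
        qed
        ultimately show False using False unfolding vgood_def by auto
      qed
      show ?thesis unfolding Aten_c[OF f1 f2] by (simp only: if_not_P[OF False])
    qed
  qed
qed


lemma FAB_reduce:
  assumes fin: "finite E"
  shows "FAB r x t V E ends = (\<Sum>g\<in>E \<rightarrow>\<^sub>E {1..r}. \<Prod>v\<in>V. Aten r x t (image_mset (g \<circ> fst) (mset_set (Hs ends E v))))"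
proof -
  let ?H = "half_edges E"
  let ?T = "\<lambda>c. (\<Prod>e\<in>E. Bmat (c (e, False)) (c (e, True))) *
     (\<Prod>v\<in>V. Aten r x t (image_mset c (mset_set {h \<in> half_edges E. hv ends h = v})))"
  define Ceq where "Ceq = {c \<in> ?H \<rightarrow>\<^sub>E {1..r}. \<forall>e\<in>E. c (e,False) = c (e,True)}"
  define \<phi> where "\<phi> = (\<lambda>g::'a \<Rightarrow> nat. restrict (\<lambda>h. g (fst h)) ?H)"
  define \<psi> where "\<psi> = (\<lambda>c::'a \<times> bool \<Rightarrow> nat. restrict (\<lambda>e. c (e, False)) E)"
  have finH: "finite ?H" using fin unfolding half_edges_def by simp
  have "FAB r x t V E ends = sum ?T (?H \<rightarrow>\<^sub>E {1..r})" unfolding FAB_def ..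
  also have "... = sum ?T Ceq"
  proof (rule sum.mono_neutral_right)
    show "finite (?H \<rightarrow>\<^sub>E {1..r})" using finH by (intro finite_PiE) auto
    show "Ceq \<subseteq> ?H \<rightarrow>\<^sub>E {1..r}" unfolding Ceq_def by auto
    show "\<forall>c\<in>(?H \<rightarrow>\<^sub>E {1..r}) - Ceq. ?T c = 0"
    proof
      fix c assume "c \<in> (?H \<rightarrow>\<^sub>E {1..r}) - Ceq"
      then obtain e where "e \<in> E" "c (e, False) \<noteq> c (e, True)" unfolding Ceq_def by auto
      then have "(\<Prod>e\<in>E. Bmat (c (e, False)) (c (e, True))) = 0"
        using fin by (subst prod_zero_iff) (auto simp: Bmat_def)
      then show "?T c = 0" by simp
    qed
  qed
  also have "... = (\<Sum>g\<in>E \<rightarrow>\<^sub>E {1..r}. ?T (\<phi> g))"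
  proof (rule sum.reindex_bij_betw[symmetric])
    show "bij_betw \<phi> (E \<rightarrow>\<^sub>E {1..r}) Ceq"
    proof (rule bij_betw_byWitness[where f' = \<psi>])
      show "\<forall>a\<in>E \<rightarrow>\<^sub>E {1..r}. \<psi> (\<phi> a) = a"
        unfolding \<phi>_def \<psi>_def half_edges_def by (auto simp: fun_eq_iff PiE_def extensional_def)
      show "\<forall>a'\<in>Ceq. \<phi> (\<psi> a') = a'"
        unfolding \<phi>_def \<psi>_def half_edges_def Ceq_def
        by (auto simp: fun_eq_iff PiE_def extensional_def) (metis (full_types))
      show "\<phi> ` (E \<rightarrow>\<^sub>E {1..r}) \<subseteq> Ceq"
        unfolding \<phi>_def Ceq_def half_edges_def by auto
      show "\<psi> ` Ceq \<subseteq> E \<rightarrow>\<^sub>E {1..r}"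
        unfolding \<psi>_def Ceq_def half_edges_def by auto
    qed
  qed
  also have "... = (\<Sum>g\<in>E \<rightarrow>\<^sub>E {1..r}. \<Prod>v\<in>V. Aten r x t (image_mset (g \<circ> fst) (mset_set (Hs ends E v))))"
  proof (intro sum.cong refl)
    fix g assume g: "g \<in> E \<rightarrow>\<^sub>E {1..r}"
    have "(\<Prod>e\<in>E. Bmat (\<phi> g (e, False)) (\<phi> g (e, True))) = 1"
      unfolding \<phi>_def half_edges_def by (intro prod.neutral) (auto simp: Bmat_def)
    moreover have "image_mset (\<phi> g) (mset_set {h \<in> half_edges E. hv ends h = v}) =
       image_mset (g \<circ> fst) (mset_set (Hs ends E v))" for v
    proof -
      have "finite {h \<in> half_edges E. hv ends h = v}" using finH by simp
      then show ?thesis unfolding Hs_def \<phi>_def by (intro image_mset_cong) auto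
    qed
    ultimately show "?T (\<phi> g) = (\<Prod>v\<in>V. Aten r x t (image_mset (g \<circ> fst) (mset_set (Hs ends E v))))"
      by simp
  qed
  finally show ?thesis .
qed


lemma prod_vertices:
  assumes fin: "finite E" "finite V" and g: "g \<in> E \<rightarrow> {1..r}"
    and deg: "\<forall>v\<in>V. card (Hs ends E v) \<ge> 1"
  shows "(\<Prod>v\<in>V. Aten r x t (image_mset (g \<circ> fst) (mset_set (Hs ends E v)))) =
    (if \<forall>v\<in>V. vgood ends g (Sg E g r) v
     then t ^ card {v\<in>V. Hs ends (Sg E g r) v = {}} *
          (\<Prod>v\<in>{v\<in>V. Hs ends (Sg E g r) v \<noteq> {}}. x (col ends g (Sg E g r) v))
     else 0)"
proof -
  let ?S = "Sg E g r"
  have "(\<Prod>v\<in>V. Aten r x t (image_mset (g \<circ> fst) (mset_set (Hs ends E v)))) =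
     (\<Prod>v\<in>V. if vgood ends g ?S v then (if Hs ends ?S v = {} then t else x (col ends g ?S v)) else 0)"
  proof (intro prod.cong refl)
    fix v assume v: "v \<in> V"
    show "Aten r x t (image_mset (g \<circ> fst) (mset_set (Hs ends E v))) =
      (if vgood ends g ?S v then (if Hs ends ?S v = {} then t else x (col ends g ?S v)) else 0)"
      by (rule vertex[OF fin(1) g]) (use deg v in auto)
  qed
  also have "... = (if \<forall>v\<in>V. vgood ends g (Sg E g r) v
     then t ^ card {v\<in>V. Hs ends (Sg E g r) v = {}} *
          (\<Prod>v\<in>{v\<in>V. Hs ends (Sg E g r) v \<noteq> {}}. x (col ends g (Sg E g r) v))
     else 0)"
  proof (cases "\<forall>v\<in>V. vgood ends g (Sg E g r) v")
    case True
    then have "(\<Prod>v\<in>V. if vgood ends g ?S v then (if Hs ends ?S v = {} then t else x (col ends g ?S v)) else 0)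
      = (\<Prod>v\<in>V. if Hs ends ?S v = {} then t else x (col ends g ?S v))"
      by (intro prod.cong) auto
    also have "... = (\<Prod>v\<in>V \<inter> {v. Hs ends ?S v = {}}. t) * (\<Prod>v\<in>V \<inter> - {v. Hs ends ?S v = {}}. x (col ends g ?S v))"
      using fin(2) by (rule prod.If_cases)
    also have "V \<inter> {v. Hs ends ?S v = {}} = {v\<in>V. Hs ends ?S v = {}}" by auto
    also have "V \<inter> - {v. Hs ends ?S v = {}} = {v\<in>V. Hs ends ?S v \<noteq> {}}" by auto
    finally show ?thesis using True by simp
  next
    case False
    then obtain v where "v \<in> V" "\<not> vgood ends g ?S v" by auto
    then have "(\<Prod>v\<in>V. if vgood ends g ?S v then (if Hs ends ?S v = {} then t else x (col ends g ?S v)) else 0) = 0"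
      using fin(2) by (subst prod_zero_iff) auto
    then show ?thesis using False by (simp only: if_False)
  qed
  finally show ?thesis .
qed

lemma hv_in_V:
  assumes "\<forall>e\<in>E. fst (ends e) \<in> V \<and> snd (ends e) \<in> V" "S \<subseteq> E" "h \<in> half_edges S"
  shows "hv ends h \<in> V"
  using assms unfolding hv_def half_edges_def by auto

lemma handshake:
  assumes fin: "finite V" "finite E" and ends: "\<forall>e\<in>E. fst (ends e) \<in> V \<and> snd (ends e) \<in> V"
    and S: "S \<subseteq> E" and deg: "\<forall>v\<in>V. card (Hs ends S v) = 0 \<or> card (Hs ends S v) = 2"
  shows "card {v\<in>V. Hs ends S v \<noteq> {}} = card S"
proof -
  have fS: "finite S" using S fin finite_subset by auto
  have fH: "finite (Hs ends S v)" for v by (rule Hs_finite[OF fS])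
  have "2 * card S = card (half_edges S)" unfolding half_edges_def by (simp add: card_cartesian_product)
  also have "half_edges S = (\<Union>v\<in>V. Hs ends S v)"
    using hv_in_V[OF ends S] unfolding Hs_def by auto
  also have "card ... = (\<Sum>v\<in>V. card (Hs ends S v))"
    using fin(1) fH by (intro card_UN_disjoint) (auto simp: Hs_def)
  also have "... = (\<Sum>v\<in>V. if Hs ends S v \<noteq> {} then 2 else 0)"
    using deg fH by (intro sum.cong refl) (metis card.empty card_0_eq)
  also have "... = (\<Sum>v\<in>{v\<in>V. Hs ends S v \<noteq> {}}. 2)"
    using fin(1) by (simp add: sum.If_cases Int_def)
  also have "... = 2 * card {v\<in>V. Hs ends S v \<noteq> {}}" by simp
  finally show ?thesis by simp
qed

lemma hv_endpts: "hv ends h \<in> endpts ends (fst h)"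
  unfolding hv_def endpts_def by auto

lemma endpts_hv: "v \<in> endpts ends e \<Longrightarrow> \<exists>b. hv ends (e, b) = v"
  unfolding hv_def endpts_def by (metis fst_conv insert_iff singletonD snd_conv)

lemma comp_rel_sub: "comp_rel ends S \<subseteq> S \<times> S"
  unfolding comp_rel_def by (rule trancl_subset_Sigma) auto

lemma comp_rel_equiv: "equiv S (comp_rel ends S)"
proof (rule equivI)
  show "comp_rel ends S \<subseteq> S \<times> S" by (rule comp_rel_sub)
  show "refl_on S (comp_rel ends S)"
    unfolding refl_on_def comp_rel_def by (auto simp: endpts_def)
  show "sym (comp_rel ends S)"
    unfolding comp_rel_def by (rule sym_trancl) (auto simp: sym_def)
  show "trans (comp_rel ends S)"
    unfolding comp_rel_def by (rule trans_trancl)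
qed

lemma comp_rel_adj:
  "e \<in> S \<Longrightarrow> e' \<in> S \<Longrightarrow> v \<in> endpts ends e \<Longrightarrow> v \<in> endpts ends e' \<Longrightarrow> (e, e') \<in> comp_rel ends S"
  unfolding comp_rel_def by (rule r_into_trancl) auto

lemma Hs_rel:
  assumes "h \<in> Hs ends S v" "h' \<in> Hs ends S v"
  shows "(fst h, fst h') \<in> comp_rel ends S"
proof -
  have "fst h \<in> S" "fst h' \<in> S" using assms unfolding Hs_def half_edges_def by auto
  moreover have "v \<in> endpts ends (fst h)" "v \<in> endpts ends (fst h')"
    using assms hv_endpts[of ends h] hv_endpts[of ends h'] unfolding Hs_def by auto
  ultimately show ?thesis by (rule comp_rel_adj)
qed


context
  fixes V :: "'v set" and E :: "'e set" and ends :: "'e \<Rightarrow> 'v \<times> 'v" and S :: "'e set" and r :: nat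
  assumes finV: "finite V" and finE: "finite E"
    and endsV: "\<forall>e\<in>E. fst (ends e) \<in> V \<and> snd (ends e) \<in> V"
    and cyc: "is_cycle V E ends S"
begin

abbreviation "R \<equiv> comp_rel ends S"
abbreviation "Q \<equiv> S // comp_rel ends S"

lemma SE: "S \<subseteq> E" using cyc unfolding is_cycle_def by auto

lemma finS: "finite S" using SE finE finite_subset by auto

lemma eqR: "equiv S R" by (rule comp_rel_equiv)

lemma finQ: "finite Q" by (rule finite_quotient[OF finS comp_rel_sub])

lemma class_sub: "C \<in> Q \<Longrightarrow> C \<subseteq> S"
  using Union_quotient[OF eqR] by blast

lemma class_closed:
  assumes "C \<in> Q" "e \<in> C" "(e, e') \<in> R"
  shows "e' \<in> C"
proof -
  obtain a where a: "C = R``{a}" "a \<in> S" using assms(1) by (rule quotientE)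
  then have "(a, e) \<in> R" using assms(2) by auto
  then have "(a, e') \<in> R" using assms(3) eqR by (meson equivE transD)
  then show ?thesis using a by auto
qed

lemma class_of: "C \<in> Q \<Longrightarrow> e \<in> C \<Longrightarrow> R``{e} = C"
proof -
  assume C: "C \<in> Q" and e: "e \<in> C"
  obtain a where a: "C = R``{a}" "a \<in> S" using C by (rule quotientE)
  then have "(a, e) \<in> R" using e by auto
  then have "R``{a} = R``{e}" by (rule equiv_class_eq[OF eqR])
  then show ?thesis using a by simp
qed

lemma Hs_class:
  assumes C: "C \<in> Q" and h: "h \<in> Hs ends C v"
  shows "Hs ends C v = Hs ends S v"
proof
  show "Hs ends C v \<subseteq> Hs ends S v"
    using class_sub[OF C] unfolding Hs_def half_edges_def by auto
next
  show "Hs ends S v \<subseteq> Hs ends C v"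
  proof
    fix h' assume h': "h' \<in> Hs ends S v"
    have hS: "h \<in> Hs ends S v" using h class_sub[OF C] unfolding Hs_def half_edges_def by auto
    have "fst h \<in> C" using h unfolding Hs_def half_edges_def by auto
    then have "fst h' \<in> C" using class_closed[OF C _ Hs_rel[OF hS h']] by simp
    then show "h' \<in> Hs ends C v" using h' unfolding Hs_def half_edges_def by auto
  qed
qed

lemma S_deg: "\<forall>v\<in>V. card (Hs ends S v) = 0 \<or> card (Hs ends S v) = 2"
  using cyc unfolding is_cycle_def sdeg_def Hs_def by auto

lemma card_class:
  assumes C: "C \<in> Q"
  shows "card {v\<in>V. Hs ends C v \<noteq> {}} = card C"
proof (rule handshake[OF finV finE endsV])
  show "C \<subseteq> E" using class_sub[OF C] SE by auto
  show "\<forall>v\<in>V. card (Hs ends C v) = 0 \<or> card (Hs ends C v) = 2"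
  proof
    fix v assume v: "v \<in> V"
    show "card (Hs ends C v) = 0 \<or> card (Hs ends C v) = 2"
    proof (cases "Hs ends C v = {}")
      case True then show ?thesis by simp
    next
      case False
      then obtain h where "h \<in> Hs ends C v" by auto
      then have "Hs ends C v = Hs ends S v" using Hs_class[OF C] by simp
      then show ?thesis using S_deg v by simp
    qed
  qed
qed

lemma card_S_vertices: "card {v\<in>V. Hs ends S v \<noteq> {}} = card S"
  using handshake[OF finV finE endsV SE S_deg] .

definition phi :: "('e set \<Rightarrow> nat) \<Rightarrow> 'e \<Rightarrow> nat" where
  "phi g = (\<lambda>e. if e \<in> E then (if e \<in> S then g (R``{e}) else r) else undefined)"

definition psi :: "('e \<Rightarrow> nat) \<Rightarrow> 'e set \<Rightarrow> nat" where
  "psi g = restrict (\<lambda>C. g (SOME e. e \<in> C)) Q"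

definition Good :: "('e \<Rightarrow> nat) set" where
  "Good = {g \<in> E \<rightarrow>\<^sub>E {1..r}. Sg E g r = S \<and> (\<forall>v\<in>V. vgood ends g S v)}"

lemma good_const:
  assumes g: "\<forall>v\<in>V. vgood ends g S v" and er: "(e, e') \<in> R"
  shows "g e = g e'"
  using er unfolding comp_rel_def
proof (induction rule: trancl_induct)
  case (base y)
  then obtain v where e: "e \<in> S" "y \<in> S" "v \<in> endpts ends e" "v \<in> endpts ends y" by auto
  obtain b where b: "hv ends (e, b) = v" using endpts_hv[OF e(3)] by auto
  obtain b' where b': "hv ends (y, b') = v" using endpts_hv[OF e(4)] by auto
  have h1: "(e, b) \<in> Hs ends S v" using b e unfolding Hs_def half_edges_def by auto
  have h2: "(y, b') \<in> Hs ends S v" using b' e unfolding Hs_def half_edges_def by auto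
  have "v \<in> V" using hv_in_V[OF endsV SE] h1 unfolding Hs_def by auto
  then have "vgood ends g S v" using g by auto
  then show ?case using h1 h2 unfolding vgood_def by fastforce
next
  case (step y z)
  then obtain v where e: "y \<in> S" "z \<in> S" "v \<in> endpts ends y" "v \<in> endpts ends z" by auto
  obtain b where b: "hv ends (y, b) = v" using endpts_hv[OF e(3)] by auto
  obtain b' where b': "hv ends (z, b') = v" using endpts_hv[OF e(4)] by auto
  have h1: "(y, b) \<in> Hs ends S v" using b e unfolding Hs_def half_edges_def by auto
  have h2: "(z, b') \<in> Hs ends S v" using b' e unfolding Hs_def half_edges_def by auto
  have "v \<in> V" using hv_in_V[OF endsV SE] h1 unfolding Hs_def by auto
  then have "vgood ends g S v" using g by auto
  then have "g y = g z" using h1 h2 unfolding vgood_def by fastforce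
  then show ?case using step by simp
qed

lemma some_in_class: "C \<in> Q \<Longrightarrow> (SOME e. e \<in> C) \<in> C"
  using in_quotient_imp_non_empty[OF eqR] by (meson ex_in_conv someI_ex)

lemma bij_phi:
  assumes r: "r \<ge> 1"
  shows "bij_betw phi (Q \<rightarrow>\<^sub>E {1..<r}) Good"
proof (rule bij_betw_byWitness[where f' = psi])
  show "\<forall>g\<in>Q \<rightarrow>\<^sub>E {1..<r}. psi (phi g) = g"
  proof
    fix g assume g: "g \<in> Q \<rightarrow>\<^sub>E {1..<r}"
    show "psi (phi g) = g"
    proof (rule ext)
      fix C
      show "psi (phi g) C = g C"
      proof (cases "C \<in> Q")
        case True
        let ?e = "SOME e. e \<in> C"
        have e: "?e \<in> C" using some_in_class[OF True] .
        then have "?e \<in> S" "?e \<in> E" using class_sub[OF True] SE by auto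
        then have "phi g ?e = g C" unfolding phi_def using class_of[OF True e] by simp
        then show ?thesis unfolding psi_def using True by simp
      next
        case False
        then show ?thesis unfolding psi_def using g by (auto simp: PiE_def extensional_def)
      qed
    qed
  qed
  show "\<forall>g\<in>Good. phi (psi g) = g"
  proof
    fix g assume g: "g \<in> Good"
    then have gP: "g \<in> E \<rightarrow>\<^sub>E {1..r}" and gS: "Sg E g r = S" and gg: "\<forall>v\<in>V. vgood ends g S v"
      unfolding Good_def by auto
    show "phi (psi g) = g"
    proof (rule ext)
      fix e
      show "phi (psi g) e = g e"
      proof (cases "e \<in> E")
        case False then show ?thesis unfolding phi_def using gP by (auto simp: PiE_def extensional_def)
      next
        case E: True
        show ?thesis
        proof (cases "e \<in> S")
          case False then show ?thesis unfolding phi_def using E gS by (auto simp: Sg_def)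
        next
          case True
          have C: "R``{e} \<in> Q" using True by (rule quotientI)
          let ?e = "SOME e'. e' \<in> R``{e}"
          have "?e \<in> R``{e}" using some_in_class[OF C] .
          then have "(e, ?e) \<in> R" by simp
          then have "g e = g ?e" using good_const[OF gg] by simp
          then show ?thesis unfolding phi_def psi_def using E True C by simp
        qed
      qed
    qed
  qed
  show "phi ` (Q \<rightarrow>\<^sub>E {1..<r}) \<subseteq> Good"
  proof
    fix g' assume "g' \<in> phi ` (Q \<rightarrow>\<^sub>E {1..<r})"
    then obtain g where g: "g \<in> Q \<rightarrow>\<^sub>E {1..<r}" and g': "g' = phi g" by auto
    have val: "e \<in> S \<Longrightarrow> phi g e \<in> {1..<r}" for e
      using g SE quotientI[of e S R] unfolding phi_def by auto
    have P: "phi g \<in> E \<rightarrow>\<^sub>E {1..r}"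
    proof -
      have "e \<in> E \<Longrightarrow> phi g e \<in> {1..r}" for e
        using val[of e] r unfolding phi_def by (cases "e \<in> S") auto
      then show ?thesis unfolding phi_def by (auto simp: PiE_def extensional_def)
    qed
    have Sg: "Sg E (phi g) r = S"
    proof (rule set_eqI)
      fix e
      show "e \<in> Sg E (phi g) r \<longleftrightarrow> e \<in> S"
      proof
        assume e: "e \<in> Sg E (phi g) r"
        then have eE: "e \<in> E" and ne: "phi g e \<noteq> r" unfolding Sg_def by auto
        show "e \<in> S"
        proof (rule ccontr)
          assume "e \<notin> S"
          then have "phi g e = r" using eE unfolding phi_def by simp
          then show False using ne by simp
        qed
      next
        assume e: "e \<in> S"
        then have "e \<in> E" using SE by auto
        moreover have "phi g e \<noteq> r" using val[OF e] by simp
        ultimately show "e \<in> Sg E (phi g) r" unfolding Sg_def by simp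
      qed
    qed
    have good: "\<forall>v\<in>V. vgood ends (phi g) S v"
    proof
      fix v assume v: "v \<in> V"
      have "\<forall>h\<in>Hs ends S v. \<forall>h'\<in>Hs ends S v. phi g (fst h) = phi g (fst h')"
      proof (intro ballI)
        fix h h' assume h: "h \<in> Hs ends S v" and h': "h' \<in> Hs ends S v"
        have "fst h \<in> S" "fst h' \<in> S" using h h' unfolding Hs_def half_edges_def by auto
        moreover have "R``{fst h} = R``{fst h'}" using Hs_rel[OF h h'] eqR by (intro equiv_class_eq)
        ultimately show "phi g (fst h) = phi g (fst h')" unfolding phi_def using SE by auto
      qed
      note cst = this
      have disj: "card (Hs ends S v) = 0 \<or> card (Hs ends S v) = 2" using S_deg v by blast
      have finH: "finite (Hs ends S v)" by (rule Hs_finite[OF finS])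
      show "vgood ends (phi g) S v"
      proof (cases "card (Hs ends S v) = 0")
        case True
        then have "Hs ends S v = {}" using finH by simp
        then show ?thesis unfolding vgood_def by (rule disjI1)
      next
        case False
        have c2: "card (Hs ends S v) = 2" using disj False by (elim disjE) simp_all
        show ?thesis unfolding vgood_def by (rule disjI2, rule conjI[OF c2 cst])
      qed
    qed
    show "g' \<in> Good" unfolding Good_def using P Sg good g' by simp
  qed
  show "psi ` Good \<subseteq> Q \<rightarrow>\<^sub>E {1..<r}"
  proof
    fix f assume "f \<in> psi ` Good"
    then obtain g where g: "g \<in> Good" and f: "f = psi g" by auto
    then have gP: "g \<in> E \<rightarrow>\<^sub>E {1..r}" and gS: "Sg E g r = S" unfolding Good_def by auto
    have "C \<in> Q \<Longrightarrow> g (SOME e. e \<in> C) \<in> {1..<r}" for C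
    proof -
      assume C: "C \<in> Q"
      have "(SOME e. e \<in> C) \<in> S" using some_in_class[OF C] class_sub[OF C] by auto
      then show ?thesis using gS gP SE unfolding Sg_def by fastforce
    qed
    then show "f \<in> Q \<rightarrow>\<^sub>E {1..<r}" unfolding f psi_def by auto
  qed
qed


lemma prod_col:
  assumes g: "g \<in> Q \<rightarrow>\<^sub>E {1..<r}"
  shows "(\<Prod>v\<in>{v\<in>V. Hs ends S v \<noteq> {}}. x (col ends (phi g) S v)) = (\<Prod>C\<in>Q. x (g C) ^ card C)"
proof -
  define VC where "VC C = {v\<in>V. Hs ends C v \<noteq> {}}" for C
  have U: "{v\<in>V. Hs ends S v \<noteq> {}} = (\<Union>C\<in>Q. VC C)"
  proof (rule set_eqI, rule iffI)
    fix v assume "v \<in> {v\<in>V. Hs ends S v \<noteq> {}}"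
    then obtain h where v: "v \<in> V" and h: "h \<in> Hs ends S v" by auto
    have fS: "fst h \<in> S" using h unfolding Hs_def half_edges_def by auto
    let ?C = "R``{fst h}"
    have C: "?C \<in> Q" using fS by (rule quotientI)
    have "fst h \<in> ?C" using eqR fS by (rule equiv_class_self)
    then have "h \<in> Hs ends ?C v" using h unfolding Hs_def half_edges_def by auto
    then show "v \<in> (\<Union>C\<in>Q. VC C)" using C v unfolding VC_def by auto
  next
    fix v assume "v \<in> (\<Union>C\<in>Q. VC C)"
    then obtain C where C: "C \<in> Q" "v \<in> VC C" by auto
    then obtain h where "h \<in> Hs ends C v" unfolding VC_def by auto
    then show "v \<in> {v\<in>V. Hs ends S v \<noteq> {}}" using Hs_class[OF C(1)] C unfolding VC_def by auto
  qed
  have colv: "col ends (phi g) S v = g C" if C: "C \<in> Q" and v: "v \<in> VC C" for C v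
  proof -
    obtain h where h: "h \<in> Hs ends C v" using v VC_def by auto
    have eq: "Hs ends C v = Hs ends S v" using Hs_class[OF C h] .
    let ?h = "SOME h. h \<in> Hs ends S v"
    have "?h \<in> Hs ends S v" using h eq by (metis someI_ex)
    then have "?h \<in> Hs ends C v" using eq by simp
    then have "fst ?h \<in> C" by (auto simp: Hs_def half_edges_def)
    then have "fst ?h \<in> S" "fst ?h \<in> E" "R``{fst ?h} = C" using class_sub[OF C] SE class_of[OF C] by auto
    then show ?thesis unfolding col_def phi_def by simp
  qed
  have finVC: "finite (VC C)" for C using finV unfolding VC_def by simp
  have "(\<Prod>v\<in>{v\<in>V. Hs ends S v \<noteq> {}}. x (col ends (phi g) S v)) = (\<Prod>C\<in>Q. \<Prod>v\<in>VC C. x (col ends (phi g) S v))"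
    unfolding U
  proof (rule prod.UNION_disjoint)
    show "finite Q" by (rule finQ)
    show "\<forall>C\<in>Q. finite (VC C)" using finVC by simp
    show "\<forall>C\<in>Q. \<forall>C'\<in>Q. C \<noteq> C' \<longrightarrow> VC C \<inter> VC C' = {}"
    proof (intro ballI impI)
      fix C C' assume C: "C \<in> Q" and C': "C' \<in> Q" and ne: "C \<noteq> C'"
      show "VC C \<inter> VC C' = {}"
      proof (rule ccontr)
        assume "VC C \<inter> VC C' \<noteq> {}"
        then obtain v h h' where h: "h \<in> Hs ends C v" and h': "h' \<in> Hs ends C' v" unfolding VC_def by auto
        have "Hs ends C v = Hs ends C' v" using Hs_class[OF C h] Hs_class[OF C' h'] by simp
        then have "h \<in> Hs ends C' v" using h by simp
        then have "fst h \<in> C \<inter> C'" using h unfolding Hs_def half_edges_def by auto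
        then show False using quotient_disj[OF eqR C C'] ne by auto
      qed
    qed
  qed
  also have "... = (\<Prod>C\<in>Q. x (g C) ^ card C)"
  proof (intro prod.cong refl)
    fix C assume C: "C \<in> Q"
    have "(\<Prod>v\<in>VC C. x (col ends (phi g) S v)) = (\<Prod>v\<in>VC C. x (g C))"
      using colv[OF C] by (intro prod.cong refl) auto
    also have "... = x (g C) ^ card (VC C)" by simp
    also have "card (VC C) = card C" unfolding VC_def by (rule card_class[OF C])
    finally show "(\<Prod>v\<in>VC C. x (col ends (phi g) S v)) = x (g C) ^ card C" .
  qed
  finally show ?thesis .
qed

lemma sum_S:
  assumes r: "r \<ge> 1" and deg: "\<forall>v\<in>V. card (Hs ends E v) \<ge> 1"
  shows "(\<Sum>g\<in>{g\<in>E \<rightarrow>\<^sub>E {1..r}. Sg E g r = S}.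
            \<Prod>v\<in>V. Aten r x t (image_mset (g \<circ> fst) (mset_set (Hs ends E v))))
         = t ^ (card V - card S) * plam r x (cycle_type ends S)"
proof -
  let ?W = "\<lambda>g. (if \<forall>v\<in>V. vgood ends g (Sg E g r) v
     then t ^ card {v\<in>V. Hs ends (Sg E g r) v = {}} *
          (\<Prod>v\<in>{v\<in>V. Hs ends (Sg E g r) v \<noteq> {}}. x (col ends g (Sg E g r) v))
     else 0)"
  let ?c = "t ^ (card V - card S)"
  have cardV: "card {v\<in>V. Hs ends S v = {}} = card V - card S"
  proof -
    have "card {v\<in>V. Hs ends S v = {}} + card {v\<in>V. Hs ends S v \<noteq> {}} = card V"
      using finV by (subst card_Un_disjoint[symmetric]) (auto intro: arg_cong[where f = card])
    then show ?thesis using card_S_vertices by simp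
  qed
  have finP: "finite (E \<rightarrow>\<^sub>E {1..r})" using finE by (intro finite_PiE) auto
  have "(\<Sum>g\<in>{g\<in>E \<rightarrow>\<^sub>E {1..r}. Sg E g r = S}.
            \<Prod>v\<in>V. Aten r x t (image_mset (g \<circ> fst) (mset_set (Hs ends E v))))
       = (\<Sum>g\<in>{g\<in>E \<rightarrow>\<^sub>E {1..r}. Sg E g r = S}. ?W g)"
  proof (intro sum.cong refl)
    fix g assume "g \<in> {g\<in>E \<rightarrow>\<^sub>E {1..r}. Sg E g r = S}"
    then have "g \<in> E \<rightarrow> {1..r}" by auto
    then show "(\<Prod>v\<in>V. Aten r x t (image_mset (g \<circ> fst) (mset_set (Hs ends E v)))) = ?W g"
      by (rule prod_vertices[OF finE finV _ deg])
  qed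
  also have "... = (\<Sum>g\<in>Good. ?W g)"
  proof (rule sum.mono_neutral_right)
    show "finite {g\<in>E \<rightarrow>\<^sub>E {1..r}. Sg E g r = S}" using finP by simp
    show "Good \<subseteq> {g\<in>E \<rightarrow>\<^sub>E {1..r}. Sg E g r = S}" unfolding Good_def by auto
    show "\<forall>g\<in>{g\<in>E \<rightarrow>\<^sub>E {1..r}. Sg E g r = S} - Good. ?W g = 0"
      unfolding Good_def by auto
  qed
  also have "... = (\<Sum>g\<in>Good. ?c * (\<Prod>v\<in>{v\<in>V. Hs ends S v \<noteq> {}}. x (col ends g S v)))"
    using cardV unfolding Good_def by (intro sum.cong refl) auto
  also have "... = (\<Sum>g\<in>Q \<rightarrow>\<^sub>E {1..<r}. ?c * (\<Prod>v\<in>{v\<in>V. Hs ends S v \<noteq> {}}. x (col ends (phi g) S v)))"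
    by (rule sum.reindex_bij_betw[symmetric, OF bij_phi[OF r]])
  also have "... = (\<Sum>g\<in>Q \<rightarrow>\<^sub>E {1..<r}. ?c * (\<Prod>C\<in>Q. x (g C) ^ card C))"
    using prod_col by (intro sum.cong refl) auto
  also have "... = ?c * (\<Sum>g\<in>Q \<rightarrow>\<^sub>E {1..<r}. \<Prod>C\<in>Q. x (g C) ^ card C)"
    by (simp add: sum_distrib_left)
  also have "(\<Sum>g\<in>Q \<rightarrow>\<^sub>E {1..<r}. \<Prod>C\<in>Q. x (g C) ^ card C) = (\<Prod>C\<in>Q. \<Sum>i\<in>{1..<r}. x i ^ card C)"
    using finQ by (intro prod_sum_PiE[symmetric]) auto
  also have "(\<Prod>C\<in>Q. \<Sum>i\<in>{1..<r}. x i ^ card C) = plam r x (cycle_type ends S)"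
    unfolding plam_def cycle_type_def pk_def
    by (simp add: prod_unfold_prod_mset image_mset.compositionality comp_def)
  finally show ?thesis .
qed


lemma type_sum: "sum_mset (cycle_type ends S) = card S"
proof -
  have "sum_mset (cycle_type ends S) = (\<Sum>C\<in>Q. card C)"
    unfolding cycle_type_def by (simp add: sum_unfold_sum_mset)
  also have "... = card (\<Union>Q)"
  proof (rule card_Union_disjoint[symmetric])
    show "pairwise disjnt Q" using quotient_disj[OF eqR] unfolding pairwise_def disjnt_def by blast
    show "\<And>C. C \<in> Q \<Longrightarrow> finite C" using class_sub finS finite_subset by blast
  qed
  also have "\<Union>Q = S" using eqR by (rule Union_quotient)
  finally show ?thesis .
qed

lemma type_part: "cycle_type ends S \<in> partitions_upto (card V)"
proof -
  have "\<forall>k\<in>#cycle_type ends S. 0 < k"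
  proof
    fix k assume "k \<in># cycle_type ends S"
    then obtain C where C: "C \<in> Q" "k = card C" unfolding cycle_type_def using finQ by auto
    have "C \<noteq> {}" using in_quotient_imp_non_empty[OF eqR C(1)] .
    moreover have "finite C" using class_sub[OF C(1)] finS finite_subset by blast
    ultimately show "0 < k" using C by auto
  qed
  moreover have "card S \<le> card V"
    using card_S_vertices card_mono[OF finV, of "{v\<in>V. Hs ends S v \<noteq> {}}"] by auto
  ultimately show ?thesis unfolding partitions_upto_def using type_sum by auto
qed

end


lemma finite_parts: "finite (partitions_upto n)"
proof -
  have "partitions_upto n \<subseteq> mset ` {xs. set xs \<subseteq> {0..n} \<and> length xs \<le> n}"
  proof
    fix M assume M: "M \<in> partitions_upto n"
    then have pos: "\<forall>k\<in>#M. 0 < k" and s: "sum_mset M \<le> n" unfolding partitions_upto_def by auto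
    let ?xs = "sorted_list_of_multiset M"
    have mx: "mset ?xs = M" by (rule mset_sorted_list_of_multiset)
    have sz: "size (mset ?xs) = length ?xs" by (rule size_mset)
    have "length ?xs = size M" using sz unfolding mx by (rule sym)
    then have len: "length ?xs \<le> n" using size_le_sum_mset[OF pos] s by simp
    have st: "set ?xs \<subseteq> {0..n}"
    proof
      fix k assume "k \<in> set ?xs"
      then have "k \<in> set_mset (mset ?xs)" by (simp only: set_mset_mset)
      then have k: "k \<in># M" unfolding mx .
      have "sum_mset M = k + sum_mset (M - {#k#})" using k by (rule sum_mset.remove)
      then have "k \<le> sum_mset M" by simp
      then show "k \<in> {0..n}" using s by simp
    qed
    show "M \<in> mset ` {xs. set xs \<subseteq> {0..n} \<and> length xs \<le> n}"
    proof (rule image_eqI)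
      show "M = mset ?xs" using mx by simp
      show "?xs \<in> {xs. set xs \<subseteq> {0..n} \<and> length xs \<le> n}" using st len by simp
    qed
  qed
  moreover have "finite {xs. set xs \<subseteq> {0..n} \<and> length xs \<le> n}"
    by (rule finite_lists_length_le) simp
  ultimately show ?thesis using finite_subset by blast
qed

lemma FAB_cycles:
  assumes finV: "finite V" and finE: "finite E"
    and endsV: "\<forall>e\<in>E. fst (ends e) \<in> V \<and> snd (ends e) \<in> V"
    and r: "r \<ge> 1" and deg: "\<forall>v\<in>V. sdeg ends E v \<ge> 1"
  shows "FAB r x t V E ends = (\<Sum>S\<in>{S\<in>Pow E. is_cycle V E ends S}.
            t ^ (card V - card S) * plam r x (cycle_type ends S))"
proof -
  have deg': "\<forall>v\<in>V. card (Hs ends E v) \<ge> 1" using deg unfolding sdeg_def Hs_def .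
  let ?w = "\<lambda>g. \<Prod>v\<in>V. Aten r x t (image_mset (g \<circ> fst) (mset_set (Hs ends E v)))"
  have finP: "finite (E \<rightarrow>\<^sub>E {1..r})" using finE by (intro finite_PiE) auto
  have "FAB r x t V E ends = (\<Sum>g\<in>E \<rightarrow>\<^sub>E {1..r}. ?w g)" by (rule FAB_reduce[OF finE])
  also have "... = (\<Sum>S\<in>Pow E. \<Sum>g\<in>{g. g \<in> E \<rightarrow>\<^sub>E {1..r} \<and> Sg E g r = S}. ?w g)"
    by (rule sum.group[symmetric]) (use finP finE in \<open>auto simp: Sg_def\<close>)
  also have "... = (\<Sum>S\<in>Pow E. if is_cycle V E ends S
       then t ^ (card V - card S) * plam r x (cycle_type ends S) else 0)"
  proof (intro sum.cong refl)
    fix S assume S: "S \<in> Pow E"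
    show "(\<Sum>g\<in>{g. g \<in> E \<rightarrow>\<^sub>E {1..r} \<and> Sg E g r = S}. ?w g) =
      (if is_cycle V E ends S then t ^ (card V - card S) * plam r x (cycle_type ends S) else 0)"
    proof (cases "is_cycle V E ends S")
      case True
      then show ?thesis using sum_S[OF finV finE endsV True r deg'] by simp
    next
      case False
      have "?w g = 0" if g: "g \<in> E \<rightarrow>\<^sub>E {1..r}" "Sg E g r = S" for g
      proof -
        have gP: "g \<in> E \<rightarrow> {1..r}" using g by auto
        have nv: "\<not> (\<forall>v\<in>V. vgood ends g (Sg E g r) v)"
        proof
          assume allg: "\<forall>v\<in>V. vgood ends g (Sg E g r) v"
          have "is_cycle V E ends S"
            unfolding is_cycle_def
          proof
            show "S \<subseteq> E" using S by auto
            show "\<forall>v\<in>V. sdeg ends S v = 0 \<or> sdeg ends S v = 2"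
            proof
              fix v assume v: "v \<in> V"
              have "vgood ends g (Sg E g r) v" using allg v by blast
              then have "vgood ends g S v" unfolding g(2) .
              then have "Hs ends S v = {} \<or> card (Hs ends S v) = 2" unfolding vgood_def by auto
              moreover have "sdeg ends S v = card (Hs ends S v)" unfolding sdeg_def Hs_def ..
              ultimately show "sdeg ends S v = 0 \<or> sdeg ends S v = 2" by (elim disjE) simp_all
            qed
          qed
          with False show False by simp
        qed
        show ?thesis using prod_vertices[OF finE finV gP deg', of x t] nv by simp
      qed
      then have "(\<Sum>g\<in>{g. g \<in> E \<rightarrow>\<^sub>E {1..r} \<and> Sg E g r = S}. ?w g) = 0"
        by (intro sum.neutral) blast
      then show ?thesis using False by simp
    qed
  qed
  also have "... = (\<Sum>S\<in>{S\<in>Pow E. is_cycle V E ends S}.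
            t ^ (card V - card S) * plam r x (cycle_type ends S))"
    by (rule sum.inter_filter[symmetric]) (simp add: finE)
  finally show ?thesis .
qed

lemma cycles_to_parts:
  assumes finV: "finite V" and finE: "finite E"
    and endsV: "\<forall>e\<in>E. fst (ends e) \<in> V \<and> snd (ends e) \<in> V"
  shows "(\<Sum>S\<in>{S\<in>Pow E. is_cycle V E ends S}. t ^ (card V - card S) * plam r x (cycle_type ends S))
    = (\<Sum>lam\<in>partitions_upto (card V). t ^ (card V - sum_mset lam) * plam r x lam * of_nat (Ncyc V E ends lam))"
proof -
  let ?Cy = "{S\<in>Pow E. is_cycle V E ends S}"
  have finCy: "finite ?Cy" using finE by simp
  have "(\<Sum>S\<in>?Cy. t ^ (card V - card S) * plam r x (cycle_type ends S))
      = (\<Sum>lam\<in>partitions_upto (card V). \<Sum>S\<in>{S. S \<in> ?Cy \<and> cycle_type ends S = lam}.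
           t ^ (card V - card S) * plam r x (cycle_type ends S))"
    by (rule sum.group[symmetric]) (use finCy finite_parts type_part[OF finV finE endsV] in auto)
  also have "... = (\<Sum>lam\<in>partitions_upto (card V). t ^ (card V - sum_mset lam) * plam r x lam * of_nat (Ncyc V E ends lam))"
  proof (intro sum.cong refl)
    fix lam
    let ?A = "{S. S \<in> ?Cy \<and> cycle_type ends S = lam}"
    have setEq: "?A = {S. is_cycle V E ends S \<and> cycle_type ends S = lam}"
      unfolding is_cycle_def by auto
    have "(\<Sum>S\<in>?A. t ^ (card V - card S) * plam r x (cycle_type ends S))
        = (\<Sum>S\<in>?A. t ^ (card V - sum_mset lam) * plam r x lam)"
      using type_sum[OF finV finE endsV] by (intro sum.cong refl) auto
    also have "... = of_nat (card ?A) * (t ^ (card V - sum_mset lam) * plam r x lam)"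
      by simp
    finally have X: "(\<Sum>S\<in>?A. t ^ (card V - card S) * plam r x (cycle_type ends S))
        = of_nat (card ?A) * (t ^ (card V - sum_mset lam) * plam r x lam)" .
    show "(\<Sum>S\<in>?A. t ^ (card V - card S) * plam r x (cycle_type ends S))
      = t ^ (card V - sum_mset lam) * plam r x lam * of_nat (Ncyc V E ends lam)"
      unfolding Ncyc_def setEq[symmetric] by (subst X) (simp add: ac_simps)
  qed
  finally show ?thesis .
qed

theorem corollary1:
  fixes r n :: nat and V :: "'v set" and E :: "'e set" and ends :: "'e \<Rightarrow> 'v \<times> 'v"
    and a :: "nat multiset \<Rightarrow> complex"
  assumes "r \<ge> 2"
    and "finite V" and "finite E"
    and "\<forall>e\<in>E. fst (ends e) \<in> V \<and> snd (ends e) \<in> V"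
    and "card V = n" and "n \<le> r - 1"
    and "\<forall>v\<in>V. sdeg ends E v \<ge> 1"
    and "\<forall>x t. FAB r x t V E ends =
           (\<Sum>lam\<in>partitions_upto n. t ^ (n - sum_mset lam) * plam r x lam * a lam)"
  shows "\<forall>lam\<in>partitions_upto n. a lam = of_nat (Ncyc V E ends lam)"
proof -
  have F: "FAB r x t V E ends = (\<Sum>lam\<in>partitions_upto n. t ^ (n - sum_mset lam) * plam r x lam * of_nat (Ncyc V E ends lam))"
    for x t
    using FAB_cycles[OF assms(2,3,4) _ assms(7), where x=x and t=t] cycles_to_parts[OF assms(2,3,4), where t=t and r=r and x=x] assms(1,5)
    by simp
  have z: "\<forall>x. (\<Sum>lam\<in>partitions_upto n. (a lam - of_nat (Ncyc V E ends lam)) * plam r x lam) = 0"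
  proof
    fix x
    have A: "FAB r x 1 V E ends = (\<Sum>lam\<in>partitions_upto n. 1 ^ (n - sum_mset lam) * plam r x lam * a lam)"
      using assms(8) by blast
    have B: "FAB r x 1 V E ends = (\<Sum>lam\<in>partitions_upto n. 1 ^ (n - sum_mset lam) * plam r x lam * of_nat (Ncyc V E ends lam))"
      by (rule F)
    have eq: "(\<Sum>lam\<in>partitions_upto n. plam r x lam * a lam) = (\<Sum>lam\<in>partitions_upto n. plam r x lam * of_nat (Ncyc V E ends lam))"
      using A B by simp
    have "(\<Sum>lam\<in>partitions_upto n. (a lam - of_nat (Ncyc V E ends lam)) * plam r x lam)
       = (\<Sum>lam\<in>partitions_upto n. plam r x lam * a lam) - (\<Sum>lam\<in>partitions_upto n. plam r x lam * of_nat (Ncyc V E ends lam))"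
      by (simp add: sum_subtractf[symmetric] algebra_simps)
    then show "(\<Sum>lam\<in>partitions_upto n. (a lam - of_nat (Ncyc V E ends lam)) * plam r x lam) = 0"
      using eq by simp
  qed
  have "\<forall>lam\<in>partitions_upto n. a lam - of_nat (Ncyc V E ends lam) = 0"
    by (rule plam_indep[OF _ _ finite_parts z]) (use assms(1,6) in auto)
  then show ?thesis by simp
qed

end
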